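(* Let $(\lambda_k,\Gamma_k,\Theta_k)_{k\in\mathbb N}$ be a sequence in $\mathcal C_2$ with $\lim_{k\to\infty}\lambda_k=0$. Then it is not an infimizing sequence for $\tilde J$ on $\mathcal C_2$, i.e. $\tilde J(\lambda_k,\Gamma_k,\Theta_k)$ does not converge to $\inf_{\mathcal C_2}\tilde J$.
   Context: Notation: $\mathbf Q_n$ real symmetric $n\times n$ matrices; $\mathbf D_n$ diagonal matrices; $\mathbf M_n$ symmetric matrices with zero diagonal; $|\cdot|$ the determinant. $\hat\Sigma\in\mathbf Q_n$, $\hat\Sigma\succ0$. Let $\chi$ be the map keeping off-diagonal entries and zeroing the diagonal, $\delta_{max}:=\log|[\hat\Sigma^{-1}-\chi(\hat\Sigma^{-1})]\hat\Sigma|$, and assume $0<\delta<\delta_{max}$. Define $$\tilde J(\lambda,\Gamma,\Theta):=\lambda\Big(-\log\big|\hat\Sigma^{-1}+\lambda^{-1}(\chi(\Theta)-\Gamma)\big|-\log|\hat\Sigma|+\delta\Big),$$ $$\mathcal C_2:=\{(\lambda,\Gamma,\Theta):\ \lambda>0,\ I+\Gamma-\Theta\succeq0,\ \Gamma\succeq0,\ \Gamma\in\mathbf D_n,\ \Theta\in\mathbf M_n,\ \hat\Sigma^{-1}+\lambda^{-1}(\Theta-\Gamma)\succ0\}$$ (on $\mathcal C_2$, $\chi(\Theta)=\Theta$). *)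

theory Defs
  imports "HOL-Analysis.Analysis"
begin

definition sym_mat :: "real^'n^'n \<Rightarrow> bool" where
  "sym_mat A \<longleftrightarrow> transpose A = A"

definition psd :: "real^'n^'n \<Rightarrow> bool" where
  "psd A \<longleftrightarrow> sym_mat A \<and> (\<forall>x. 0 \<le> x \<bullet> (A *v x))"

definition pd :: "real^'n^'n \<Rightarrow> bool" where
  "pd A \<longleftrightarrow> sym_mat A \<and> (\<forall>x. x \<noteq> 0 \<longrightarrow> 0 < x \<bullet> (A *v x))"

definition diag_mat :: "real^'n^'n \<Rightarrow> bool" where
  "diag_mat A \<longleftrightarrow> (\<forall>i j. i \<noteq> j \<longrightarrow> A $ i $ j = 0)"

definition offdiag_sym :: "real^'n^'n \<Rightarrow> bool" where
  "offdiag_sym A \<longleftrightarrow> sym_mat A \<and> (\<forall>i. A $ i $ i = 0)"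

definition offd :: "real^'n^'n \<Rightarrow> real^'n^'n" where
  "offd A = (\<chi> i j. if i = j then 0 else A $ i $ j)"

definition delta_max :: "real^'n^'n \<Rightarrow> real" where
  "delta_max S = ln (det ((matrix_inv S - offd (matrix_inv S)) ** S))"

definition Jt :: "real^'n^'n \<Rightarrow> real \<Rightarrow> real \<Rightarrow> real^'n^'n \<Rightarrow> real^'n^'n \<Rightarrow> real" where
  "Jt S \<delta> lam G T =
     lam * (- ln (det (matrix_inv S + (1 / lam) *\<^sub>R (offd T - G))) - ln (det S) + \<delta>)"

definition C2 :: "real^'n^'n \<Rightarrow> (real \<times> (real^'n^'n) \<times> (real^'n^'n)) set" where
  "C2 S = {(lam, G, T). lam > 0 \<and> psd (mat 1 + G - T) \<and> psd G \<and> diag_mat G \<and>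
             offdiag_sym T \<and> pd (matrix_inv S + (1 / lam) *\<^sub>R (T - G))}"

end

theory Submission
  imports Defs
begin

lemma quad_form: "x \<bullet> ((A::real^'n^'n) *v x) = (\<Sum>i\<in>UNIV. \<Sum>j\<in>UNIV. x$i * A$i$j * x$j)"
  by (simp add: inner_vec_def matrix_vector_mult_def sum_distrib_left mult.assoc)

lemma mv_axis: "((A::real^'n^'n) *v axis j c) $ i = A$i$j * c"
  by (simp add: matrix_vector_mult_def axis_def if_distrib[where f="\<lambda>x. _ * x"] cong: if_cong)

lemma quad_axis: "axis i a \<bullet> ((A::real^'n^'n) *v axis j b) = a * A$i$j * b"
  by (simp add: inner_axis' mv_axis)

lemma psd_diag_nonneg: assumes "psd A" shows "0 \<le> (A::real^'n^'n)$i$i"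
proof -
  have "0 \<le> axis i 1 \<bullet> (A *v axis i 1)" using assms by (simp add: psd_def)
  then show ?thesis by (simp add: quad_axis)
qed

lemma psd_entry: assumes "psd A" shows "2 * \<bar>(A::real^'n^'n)$i$j\<bar> \<le> A$i$i + A$j$j"
proof -
  have sym: "A$j$i = A$i$j" using assms unfolding psd_def sym_mat_def
    by (metis transpose_def vec_lambda_beta)
  have q: "(axis i 1 + axis j s) \<bullet> (A *v (axis i 1 + axis j s))
      = A$i$i + s * (A$i$j + A$j$i) + s^2 * A$j$j" for s :: real
    by (simp add: matrix_vector_right_distrib inner_add_left inner_add_right quad_axis algebra_simps power2_eq_square)
  have "0 \<le> A$i$i + s * (A$i$j + A$j$i) + s^2 * A$j$j" for s
    using assms q[of s] unfolding psd_def by metis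
  from this[of 1] this[of "-1"] sym show ?thesis by (simp add: abs_if)
qed

lemma pd_inj: assumes "pd (A::real^'n^'n)" shows "inj ((*v) A)"
proof (rule injI)
  fix x y assume "A *v x = A *v y"
  then have "A *v (x - y) = 0" by (simp add: matrix_vector_mult_diff_distrib)
  then show "x = y" using assms unfolding pd_def by (metis inner_zero_right less_irrefl right_minus_eq)
qed

lemma pd_det_nz: assumes "pd (A::real^'n^'n)" shows "det A \<noteq> 0"
  using pd_inj[OF assms] det_eq_0_rank less_rank_noninjective by blast

lemma pd_det_pos: assumes "pd (A::real^'n^'n)" shows "0 < det A"
proof (rule ccontr)
  assume neg: "\<not> 0 < det A"
  define M where "M t = (1-t) *\<^sub>R (mat 1::real^'n^'n) + t *\<^sub>R A" for t :: real
  have pdM: "pd (M t)" if "0 \<le> t" "t \<le> 1" for t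
    unfolding pd_def
  proof
    show "sym_mat (M t)" using assms unfolding M_def pd_def sym_mat_def
      by (simp add: transpose_def vec_eq_iff mat_def)
    show "\<forall>x. x \<noteq> 0 \<longrightarrow> 0 < x \<bullet> (M t *v x)"
    proof (intro allI impI)
      fix x :: "real^'n" assume x: "x \<noteq> 0"
      have e: "x \<bullet> (M t *v x) = (1-t) * (x \<bullet> x) + t * (x \<bullet> (A *v x))"
        unfolding M_def by (simp add: matrix_vector_mult_add_rdistrib scaleR_matrix_vector_assoc[symmetric] inner_add_right)
      have "0 < x \<bullet> x" using x by simp
      moreover have "0 < x \<bullet> (A *v x)" using assms x unfolding pd_def by blast
      have "0 < (1-t) * (x \<bullet> x) + t * (x \<bullet> (A *v x))"
      proof (cases "t = 0")
        case True then show ?thesis using \<open>0 < x \<bullet> x\<close> by simp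
      next
        case False
        then have "0 < t * (x \<bullet> (A *v x))" using that \<open>0 < x \<bullet> (A *v x)\<close> by simp
        moreover have "0 \<le> (1-t) * (x \<bullet> x)" using that \<open>0 < x \<bullet> x\<close> by simp
        ultimately show ?thesis by simp
      qed
      then show "0 < x \<bullet> (M t *v x)" unfolding e .
    qed
  qed
  have cont: "continuous_on {0..1} (\<lambda>t. det (M t))"
    unfolding det_def M_def by (simp add: mat_def) (intro continuous_intros)
  have "M 0 = mat 1" "M 1 = A" by (simp_all add: M_def)
  then have "det (M 1) \<le> 0" "0 \<le> det (M 0)" using neg by auto
  from IVT2'[of "\<lambda>t. det (M t)", OF this _ cont] obtain t where "0 \<le> t" "t \<le> 1" "det (M t) = 0"
    by auto
  with pd_det_nz[OF pdM] show False by blast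
qed

lemma pd_psd: "pd A \<Longrightarrow> psd A"
  unfolding pd_def psd_def by (metis inner_zero_left order_refl less_imp_le)

lemma pd_inv_facts: assumes "pd (S::real^'n^'n)"
  shows "S ** matrix_inv S = mat 1" "matrix_inv S ** S = mat 1"
proof -
  have "invertible S" using pd_det_nz[OF assms] invertible_det_nz by blast
  then have "\<exists>A'. S ** A' = mat 1 \<and> A' ** S = mat 1" unfolding invertible_def .
  from someI_ex[OF this] show "S ** matrix_inv S = mat 1" "matrix_inv S ** S = mat 1"
    unfolding matrix_inv_def by auto
qed

lemma pd_inv: assumes "pd (S::real^'n^'n)" shows "pd (matrix_inv S)"
proof -
  let ?I = "matrix_inv S"
  note f = pd_inv_facts[OF assms]
  have symS: "transpose S = S" using assms unfolding pd_def sym_mat_def by simp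
  have "transpose ?I ** S = mat 1"
    using f(1) by (metis matrix_transpose_mul symS transpose_mat)
  then have "transpose ?I = ?I"
    by (metis f(1) matrix_mul_assoc matrix_mul_lid matrix_mul_rid)
  moreover have "0 < x \<bullet> (?I *v x)" if x: "x \<noteq> 0" for x
  proof -
    define y where "y = ?I *v x"
    have Sy: "S *v y = x" unfolding y_def by (simp add: matrix_vector_mul_assoc f(1))
    have "y \<noteq> 0" using Sy x by auto
    then have "0 < y \<bullet> (S *v y)" using assms unfolding pd_def by blast
    then show ?thesis unfolding y_def[symmetric] using Sy by (simp add: inner_commute)
  qed
  ultimately show ?thesis unfolding pd_def sym_mat_def by blast
qed

lemma det_bound: assumes "\<And>i j. \<bar>(A::real^'n^'n)$i$j\<bar> \<le> B"
  shows "\<bar>det A\<bar> \<le> real (card {p. p permutes (UNIV::'n set)}) * B ^ CARD('n)"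
proof -
  have "\<bar>det A\<bar> \<le> (\<Sum>p\<in>{p. p permutes (UNIV::'n set)}. \<bar>of_int (sign p) * prod (\<lambda>i. A$i$p i) UNIV\<bar>)"
    unfolding det_def by (rule sum_abs)
  also have "\<dots> \<le> (\<Sum>p\<in>{p. p permutes (UNIV::'n set)}. B ^ CARD('n))"
  proof (rule sum_mono)
    fix p
    have "\<bar>of_int (sign p) * prod (\<lambda>i. A$i$p i) UNIV\<bar> = prod (\<lambda>i. \<bar>A$i$p i\<bar>) UNIV"
    proof -
      have "\<bar>real_of_int (sign p)\<bar> = 1" by (metis abs_sign of_int_1 of_int_abs)
      then show ?thesis unfolding abs_mult by (simp add: abs_prod)
    qed
    also have "\<dots> \<le> prod (\<lambda>i. B) (UNIV::'n set)"
      by (rule prod_mono) (simp add: assms)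
    finally show "\<bar>of_int (sign p) * prod (\<lambda>i. A$i$p i) UNIV\<bar> \<le> B ^ CARD('n)" by simp
  qed
  finally show ?thesis by simp
qed

lemma quad_bound: "\<bar>x \<bullet> ((M::real^'n^'n) *v x)\<bar> \<le> (\<Sum>i\<in>UNIV. \<Sum>j\<in>UNIV. \<bar>M$i$j\<bar>) * (x \<bullet> x)"
proof -
  have xx: "\<bar>x$i * x$j\<bar> \<le> x \<bullet> x" for i j
  proof -
    have "\<bar>x$i * x$j\<bar> \<le> norm x * norm x"
      unfolding abs_mult by (rule mult_mono) (auto simp: component_le_norm_cart)
    then show ?thesis by (simp add: dot_square_norm power2_eq_square)
  qed
  have "\<bar>x \<bullet> (M *v x)\<bar> \<le> (\<Sum>i\<in>UNIV. \<Sum>j\<in>UNIV. \<bar>x$i * M$i$j * x$j\<bar>)"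
    unfolding quad_form by (rule order_trans[OF sum_abs sum_mono]) (rule sum_abs)
  also have "\<dots> \<le> (\<Sum>i\<in>UNIV. \<Sum>j\<in>UNIV. \<bar>M$i$j\<bar> * (x \<bullet> x))"
  proof (intro sum_mono)
    fix i j
    have "\<bar>x$i * M$i$j * x$j\<bar> = \<bar>M$i$j\<bar> * \<bar>x$i * x$j\<bar>" by (simp add: abs_mult)
    also have "\<dots> \<le> \<bar>M$i$j\<bar> * (x \<bullet> x)" by (rule mult_left_mono[OF xx]) simp
    finally show "\<bar>x$i * M$i$j * x$j\<bar> \<le> \<bar>M$i$j\<bar> * (x \<bullet> x)" .
  qed
  finally show ?thesis by (simp add: sum_distrib_right)
qed

lemma offd_id: "(\<forall>i. T$i$i = 0) \<Longrightarrow> offd T = T"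
  unfolding offd_def by (simp add: vec_eq_iff)


theorem lemma1:
  fixes S :: "real^'n^'n" and \<delta> :: real
    and lam :: "nat \<Rightarrow> real" and G T :: "nat \<Rightarrow> real^'n^'n"
  assumes "pd S"
    and "0 < \<delta>" and "\<delta> < delta_max S"
    and "\<And>k. (lam k, G k, T k) \<in> C2 S"
    and "lam \<longlonglongrightarrow> 0"
  shows "\<not> ((\<lambda>k. ereal (Jt S \<delta> (lam k) (G k) (T k)))
             \<longlonglongrightarrow> (INF p\<in>C2 S. ereal (case p of (l, g, t) \<Rightarrow> Jt S \<delta> l g t)))"
proof
  define Si where "Si = matrix_inv S"
  define L where "L = (INF p\<in>C2 S. ereal (case p of (l, g, t) \<Rightarrow> Jt S \<delta> l g t))"
  assume lim: "(\<lambda>k. ereal (Jt S \<delta> (lam k) (G k) (T k))) \<longlonglongrightarrow> L"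
  have pdSi: "pd Si" unfolding Si_def using pd_inv[OF assms(1)] .
  have symSi: "Si$j$i = Si$i$j" for i j using pdSi unfolding pd_def sym_mat_def
    by (metis transpose_def vec_lambda_beta)
  have detS: "0 < det S" using pd_det_pos[OF assms(1)] .
  define B where "B = (\<Sum>i\<in>UNIV. \<bar>Si$i$i\<bar>)"
  define K where "K = real (card {p. p permutes (UNIV::'n set)}) * B ^ CARD('n)"
  define c where "c = - ln K - ln (det S) + \<delta>"
  have lowJ: "lam k * c \<le> Jt S \<delta> (lam k) (G k) (T k)" for k
  proof -
    have C: "lam k > 0" "psd (G k)" "offdiag_sym (T k)"
      "pd (Si + (1 / lam k) *\<^sub>R (T k - G k))"
      using assms(4)[of k] unfolding C2_def Si_def by auto
    have offT: "offd (T k) = T k" using C(3) offd_id unfolding offdiag_sym_def by blast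
    define A where "A = Si + (1 / lam k) *\<^sub>R (T k - G k)"
    have pdA: "pd A" using C(4) unfolding A_def .
    have diagA: "A$i$i \<le> Si$i$i" for i
    proof -
      have "0 \<le> G k $i$i" using psd_diag_nonneg[OF C(2)] .
      moreover have "T k $i$i = 0" using C(3) unfolding offdiag_sym_def by blast
      ultimately show ?thesis unfolding A_def using C(1) by simp
    qed
    have SiB: "Si$i$i \<le> B" for i
    proof -
      have "\<bar>Si$i$i\<bar> \<le> B" unfolding B_def by (rule member_le_sum) auto
      then show ?thesis by linarith
    qed
    have "\<bar>A$i$j\<bar> \<le> B" for i j
      using psd_entry[OF pd_psd[OF pdA], of i j] diagA[of i] diagA[of j] SiB[of i] SiB[of j] by linarith
    then have "\<bar>det A\<bar> \<le> K" unfolding K_def by (rule det_bound)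
    moreover have "0 < det A" using pd_det_pos[OF pdA] .
    ultimately have "ln (det A) \<le> ln K" by simp
    then have "c \<le> - ln (det A) - ln (det S) + \<delta>" unfolding c_def by simp
    then show ?thesis unfolding Jt_def offT Si_def[symmetric] A_def[symmetric] using C(1) by (simp add: mult_left_mono)
  qed
  have "(\<lambda>k. ereal (lam k * c)) \<longlonglongrightarrow> ereal (0 * c)"
    by (intro tendsto_intros assms(5))
  then have lim0: "(\<lambda>k. ereal (lam k * c)) \<longlonglongrightarrow> ereal 0" by simp
  have "ereal 0 \<le> L"
    by (rule LIMSEQ_le[OF lim0 lim]) (use lowJ in auto)
  \<comment> \<open>a point with negative value\<close>
  define Od where "Od = offd Si"
  define Cs where "Cs = (\<Sum>i\<in>UNIV. \<Sum>j\<in>UNIV. \<bar>Od$i$j\<bar>)"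
  define l0 where "l0 = 1 / (Cs + 1)"
  have Cs0: "0 \<le> Cs" unfolding Cs_def by (intro sum_nonneg) auto
  have l0: "0 < l0" unfolding l0_def using Cs0 by simp
  have l0Cs: "l0 * Cs \<le> 1" unfolding l0_def using Cs0 by (simp add: field_simps)
  define T0 where "T0 = - (l0 *\<^sub>R Od)"
  define Dg where "Dg = Si - Od"
  have Dg_ent: "Dg$i$j = (if i = j then Si$i$i else 0)" for i j
    unfolding Dg_def Od_def offd_def by simp
  have symOd: "transpose Od = Od" unfolding Od_def offd_def transpose_def
    by (simp add: vec_eq_iff symSi)
  have offT0: "offd T0 = T0" by (rule offd_id) (simp add: T0_def Od_def offd_def)
  have pdDg: "pd Dg"
    unfolding pd_def sym_mat_def
  proof (intro conjI allI impI)
    show "transpose Dg = Dg" by (simp add: vec_eq_iff transpose_def Dg_ent)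
    fix x :: "real^'n" assume "x \<noteq> 0"
    then obtain i where xi: "x$i \<noteq> 0" by (auto simp: vec_eq_iff)
    have pos: "0 < Si$j$j" for j
      using pdSi unfolding pd_def by (metis (no_types) axis_eq_0_iff quad_axis mult_1 mult_1_right zero_neq_one)
    have e: "x \<bullet> (Dg *v x) = (\<Sum>j\<in>UNIV. Si$j$j * (x$j)^2)"
      unfolding quad_form Dg_ent by (simp add: if_distrib[where f="\<lambda>y. _ * y"] if_distribR power2_eq_square mult.commute mult.left_commute cong: if_cong)
    have "0 < Si$i$i * (x$i)^2" using pos[of i] xi by simp
    also have "\<dots> \<le> (\<Sum>j\<in>UNIV. Si$j$j * (x$j)^2)"
      by (rule member_le_sum) (auto intro!: mult_nonneg_nonneg less_imp_le[OF pos])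
    finally show "0 < x \<bullet> (Dg *v x)" unfolding e .
  qed
  have inC2: "(l0, 0, T0) \<in> C2 S"
    unfolding C2_def
  proof (clarsimp, intro conjI)
    show "0 < l0" by (rule l0)
    show "psd (mat 1 - T0)"
      unfolding psd_def
    proof (intro conjI allI)
      show "sym_mat (mat 1 - T0)" unfolding sym_mat_def T0_def using symOd
        by (simp add: vec_eq_iff transpose_def mat_def)
      fix x :: "real^'n"
      have e: "x \<bullet> ((mat 1 - T0) *v x) = x \<bullet> x + l0 * (x \<bullet> (Od *v x))"
        unfolding T0_def by (simp add: matrix_vector_mult_add_rdistrib scaleR_matrix_vector_assoc[symmetric] inner_add_right)
      have "\<bar>x \<bullet> (Od *v x)\<bar> \<le> Cs * (x \<bullet> x)" unfolding Cs_def by (rule quad_bound)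
      then have "l0 * \<bar>x \<bullet> (Od *v x)\<bar> \<le> l0 * Cs * (x \<bullet> x)" using l0 by (simp add: mult_left_mono)
      also have "\<dots> \<le> x \<bullet> x" using l0Cs mult_right_mono[OF l0Cs, of "x \<bullet> x"] by simp
      finally have h1: "l0 * \<bar>x \<bullet> (Od *v x)\<bar> \<le> x \<bullet> x" .
      have "l0 * (- \<bar>x \<bullet> (Od *v x)\<bar>) \<le> l0 * (x \<bullet> (Od *v x))"
        using l0 by (intro mult_left_mono) auto
      then show "0 \<le> x \<bullet> ((mat 1 - T0) *v x)" unfolding e using h1 by simp
    qed
    show "psd (0::real^'n^'n)" unfolding psd_def sym_mat_def by (simp add: vec_eq_iff transpose_def)
    show "diag_mat (0::real^'n^'n)" unfolding diag_mat_def by simp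
    show "offdiag_sym T0" unfolding offdiag_sym_def sym_mat_def T0_def using symOd
      by (simp add: vec_eq_iff transpose_def Od_def offd_def)
    have "matrix_inv S + (1 / l0) *\<^sub>R T0 = Dg"
      unfolding T0_def Dg_def Si_def using l0 by simp
    then show "pd (matrix_inv S + (1 / l0) *\<^sub>R T0)" using pdDg by simp
  qed
  have J0: "Jt S \<delta> l0 0 T0 = l0 * (\<delta> - delta_max S)"
  proof -
    have "Si + (1 / l0) *\<^sub>R (offd T0 - 0) = Dg"
      unfolding offT0 using l0 by (simp add: T0_def Dg_def)
    moreover have "delta_max S = ln (det Dg) + ln (det S)"
      unfolding delta_max_def Si_def[symmetric] Od_def[symmetric] Dg_def[symmetric] det_mul
      using pd_det_pos[OF pdDg] detS by (simp add: ln_mult)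
    ultimately show ?thesis unfolding Jt_def Si_def[symmetric] by (simp add: algebra_simps)
  qed
  have "L \<le> ereal (Jt S \<delta> l0 0 T0)"
    unfolding L_def using inC2 by (rule INF_lower2) simp
  also have "\<dots> < ereal 0" unfolding J0 using l0 assms(3) by (simp add: mult_pos_neg)
  finally show False using \<open>ereal 0 \<le> L\<close> by simp
qed

end
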